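(* With the setup of the context, let $\mu$ be any weight on $F$. Then for every $x\in V(G)$ and $y\in V(H)$, $$\mathbb P_{F,\mu}(x\sim_F y)=\mathbb P_{G,\mu}(x\sim_G v^-)\,\mathbb P_{H_0,\mu}(v^-\sim_{H_0} y)+\mathbb P_{G,\mu}(x\sim_G v^+)\,\mathbb P_{H_0,\mu}(v^+\sim_{H_0} y)-\mathbb P_{G,\mu}(x\sim_G v^-\cap x\sim_G v^+)\,\mathbb P_{H_0,\mu}(v^-\sim_{H_0} y\cap v^+\sim_{H_0} y),$$ where $\mathbb P_{G,\mu}$ and $\mathbb P_{H_0,\mu}$ denote the percolation measures with respect to the restrictions of $\mu$ to $E(G)$ and $E(H_0)$ respectively.
   Context: All graphs are finite and simple. For a graph $G$, a weight is a function $\mu\colon E(G)\to[0,1]$; the associated edge-percolation probability space has sample space $\mathscr P(E(G))$, with $\mathbb P_{G,\mu}(X)=\prod_{e\in X}\mu(e)\prod_{e\notin X}(1-\mu(e))$ for $X\subseteq E(G)$ (edges independently open, edge $e$ with probability $\mu(e)$). For vertices $x,y$, $(x\sim_G y)$ is the event that $x$ and $y$ are joined by a path of open edges of $G$. The bunkbed graph $BB(G)=G\,\Box\,K_2$ has vertex set $V(G)\times\{0,1\}$, writing $x^-=(x,0)$, $x^+=(x,1)$, with edges $x^-y^-$ and $x^+y^+$ for every $xy\in E(G)$ and vertical edges $x^-x^+$ for every $x\in V(G)$. Setup: let $\overline F$ be a graph and $v\in V(\overline F)$ a cut vertex; let $V_1,\dots,V_k$ ($k\ge2$) be the vertex sets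 of the components of $\overline F\setminus\{v\}$, fix $I\subseteq\{1,\dots,k\}$, and set $\overline G=\overline F[\bigcup_{i\in I}V_i\cup\{v\}]$, $\overline H=\overline F[\bigcup_{i\notin I}V_i\cup\{v\}]$ (induced subgraphs). Let $F=BB(\overline F)$, $G=BB(\overline G)$, $H=BB(\overline H)$, regarded as subgraphs of $F$, and $H_0=H\setminus\{v^-v^+\}$ (the graph $H$ with the edge $v^-v^+$ removed); thus $E(F)$ is the disjoint union of $E(G)$ and $E(H_0)$. *)

theory Defs
  imports Complex_Main
begin

definition simple_graph :: "'a set \<Rightarrow> 'a set set \<Rightarrow> bool" where
  "simple_graph V E \<longleftrightarrow> finite V \<and> (\<forall>e\<in>E. e \<subseteq> V \<and> card e = 2)"

definition joined :: "'a set set \<Rightarrow> 'a \<Rightarrow> 'a \<Rightarrow> bool" where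
  "joined X x y \<longleftrightarrow> (\<lambda>a b. {a, b} \<in> X)\<^sup>*\<^sup>* x y"

definition induced_edges :: "'a set set \<Rightarrow> 'a set \<Rightarrow> 'a set set" where
  "induced_edges E W = {e \<in> E. e \<subseteq> W}"

definition components :: "'a set \<Rightarrow> 'a set set \<Rightarrow> 'a set set" where
  "components V E = (\<lambda>x. {y \<in> V. joined E x y}) ` V"

definition del_vertex_edges :: "'a set set \<Rightarrow> 'a \<Rightarrow> 'a set set" where
  "del_vertex_edges E w = {e \<in> E. w \<notin> e}"

definition cut_vertex :: "'a set \<Rightarrow> 'a set set \<Rightarrow> 'a \<Rightarrow> bool" where
  "cut_vertex V E w \<longleftrightarrow> w \<in> V \<and>
     card (components (V - {w}) (del_vertex_edges E w)) > card (components V E)"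

text \<open>Bunkbed graph: vertex (x,False) is x^-, (x,True) is x^+.\<close>
definition bb_vertices :: "'a set \<Rightarrow> ('a \<times> bool) set" where
  "bb_vertices V = V \<times> UNIV"

definition bb_edges :: "'a set \<Rightarrow> 'a set set \<Rightarrow> ('a \<times> bool) set set" where
  "bb_edges V E =
     {{(x, b), (y, b)} | x y b. {x, y} \<in> E} \<union> {{(x, False), (x, True)} | x. x \<in> V}"

definition perc_prob :: "'e set \<Rightarrow> ('e \<Rightarrow> real) \<Rightarrow> ('e set \<Rightarrow> bool) \<Rightarrow> real" where
  "perc_prob E mu A =
     (\<Sum>X\<in>{X. X \<subseteq> E \<and> A X}. (\<Prod>e\<in>X. mu e) * (\<Prod>e\<in>E - X. 1 - mu e))"

end

theory Submission
  imports Defs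
begin

lemma joined_refl: "joined X a a" by (simp add: joined_def)
lemma joined_edge: "{a,b} \<in> X \<Longrightarrow> joined X a b"
  unfolding joined_def by (rule r_into_rtranclp) simp
lemma joined_trans: "joined X a b \<Longrightarrow> joined X b c \<Longrightarrow> joined X a c"
  unfolding joined_def by (rule rtranclp_trans)
lemma joined_mono: "joined X a b \<Longrightarrow> X \<subseteq> Y \<Longrightarrow> joined Y a b"
  unfolding joined_def
  by (induction rule: rtranclp_induct) (auto intro: rtranclp.rtrancl_into_rtrancl)
lemma joined_sym: "joined X a b \<Longrightarrow> joined X b a"
  unfolding joined_def
proof (induction rule: rtranclp_induct)
  case base then show ?case by simp
next
  case (step y z)
  then have "{z,y} \<in> X" by (simp add: insert_commute)
  then show ?case using step.IH by (meson converse_rtranclp_into_rtranclp)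
qed
lemma joined_closed: "joined X a b \<Longrightarrow> a \<in> W \<Longrightarrow> \<forall>e\<in>X. e \<subseteq> W \<Longrightarrow> b \<in> W"
  unfolding joined_def
  by (induction rule: rtranclp_induct) auto

lemma key:
  assumes X: "X \<subseteq> EG \<union> EH" and cGa: "\<forall>e\<in>EG. e \<subseteq> WG" and cHa: "\<forall>e\<in>EH. e \<subseteq> WH"
    and WGH: "WG \<inter> WH \<subseteq> {p,q}" and pq: "p \<in> WG" "q \<in> WG" "p \<in> WH" "q \<in> WH"
    and x: "x \<in> WG" and y: "y \<in> WH"
  shows "joined X x y \<longleftrightarrow> (joined (X\<inter>EG) x p \<and> joined (X\<inter>EH) p y)
           \<or> (joined (X\<inter>EG) x q \<and> joined (X\<inter>EH) q y)"
proof -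
  let ?G = "X \<inter> EG" and ?H = "X \<inter> EH"
  have cG: "\<forall>e\<in>?G. e \<subseteq> WG" using cGa by auto
  have cH: "\<forall>e\<in>?H. e \<subseteq> WH" using cHa by auto
  have inG: "\<And>a b. joined ?G a b \<Longrightarrow> a \<in> WG \<Longrightarrow> b \<in> WG" using joined_closed cG by metis
  have inH: "\<And>a b. joined ?H a b \<Longrightarrow> a \<in> WH \<Longrightarrow> b \<in> WH" using joined_closed cH by metis
  have two: "\<And>z. z \<in> WG \<Longrightarrow> z \<in> WH \<Longrightarrow> z \<in> {p,q}" using WGH by auto
  define T where "T z \<longleftrightarrow> joined ?G x z \<or> (\<exists>c\<in>{p,q}. joined ?G x c \<and> joined ?H c z)
     \<or> (\<exists>c\<in>{p,q}. \<exists>d\<in>{p,q}. joined ?G x c \<and> joined ?H c d \<and> joined ?G d z)" for z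
  have cW: "c \<in> WG" "c \<in> WH" if "c \<in> {p,q}" for c using that pq by auto
  have Tall: "T z" if "joined X x z" for z
    using that unfolding joined_def
  proof (induction rule: rtranclp_induct)
    case base show ?case unfolding T_def by (simp add: joined_refl)
  next
    case (step z w)
    have e: "{z,w} \<in> X" using step.hyps(2) by simp
    have zw: "{z,w} \<in> ?G \<or> {z,w} \<in> ?H" using e X by auto
    from step.IH consider (T1) "joined ?G x z"
      | (T2) c where "c\<in>{p,q}" "joined ?G x c" "joined ?H c z"
      | (T3) c d where "c\<in>{p,q}" "d\<in>{p,q}" "joined ?G x c" "joined ?H c d" "joined ?G d z"
      unfolding T_def by blast
    then show "T w"
    proof cases
      case T1
      show ?thesis
      proof (cases "{z,w} \<in> ?G")
        case True
        then have "joined ?G x w" using T1 joined_trans joined_edge by metis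
        then show ?thesis unfolding T_def by blast
      next
        case False
        then have h: "{z,w} \<in> ?H" using zw by blast
        have "z \<in> WG" using inG T1 x by blast
        moreover have "z \<in> WH" using h cH by blast
        ultimately have "z \<in> {p,q}" using two by blast
        moreover have "joined ?H z w" using h joined_edge by metis
        ultimately show ?thesis unfolding T_def using T1 by blast
      qed
    next
      case T2
      show ?thesis
      proof (cases "{z,w} \<in> ?G")
        case True
        have "z \<in> WH" using inH T2 cW by blast
        moreover have "z \<in> WG" using True cG by blast
        ultimately have "z \<in> {p,q}" using two by blast
        moreover have "joined ?G z w" using True joined_edge by metis
        ultimately show ?thesis unfolding T_def using T2 by blast
      next
        case False
        then have h: "{z,w} \<in> ?H" using zw by blast
        have "joined ?H c w" using T2 h joined_edge joined_trans by metis
        then show ?thesis unfolding T_def using T2 by blast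
      qed
    next
      case T3
      show ?thesis
      proof (cases "{z,w} \<in> ?G")
        case True
        have "joined ?G d w" using T3 True joined_edge joined_trans by metis
        then show ?thesis unfolding T_def using T3 by blast
      next
        case False
        then have h: "{z,w} \<in> ?H" using zw by blast
        have "z \<in> WG" using inG T3 cW by blast
        moreover have "z \<in> WH" using h cH by blast
        ultimately have zpq: "z \<in> {p,q}" using two by blast
        have hw: "joined ?H z w" using h joined_edge by metis
        consider "z = d" | "c = z" | "c = d" using zpq T3 by blast
        then show ?thesis
        proof cases
          case 1
          then have "joined ?H c w" using T3 hw joined_trans by metis
          then show ?thesis unfolding T_def using T3 by blast
        next
          case 2
          then have "joined ?G x z" using T3 by simp
          then show ?thesis unfolding T_def using zpq hw by blast
        next
          case 3
          then have "joined ?G x z" using T3 joined_trans by metis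
          then show ?thesis unfolding T_def using zpq hw by blast
        qed
      qed
    qed
  qed
  show ?thesis
  proof
    assume "joined X x y"
    then have "T y" by (rule Tall)
    then consider (T1) "joined ?G x y"
      | (T2) c where "c\<in>{p,q}" "joined ?G x c" "joined ?H c y"
      | (T3) c d where "c\<in>{p,q}" "d\<in>{p,q}" "joined ?G x c" "joined ?H c d" "joined ?G d y"
      unfolding T_def by blast
    then have "\<exists>c\<in>{p,q}. joined ?G x c \<and> joined ?H c y"
    proof cases
      case T1
      have "y \<in> WG" using inG T1 x by blast
      then have "y \<in> {p,q}" using two y by blast
      then show ?thesis using T1 joined_refl[of ?H y] by blast
    next
      case T2 then show ?thesis by blast
    next
      case T3
      have "y \<in> WG" using inG T3 cW by blast
      then have ypq: "y \<in> {p,q}" using two y by blast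
      consider "y = d" | "c = y" | "c = d" using ypq T3 by blast
      then show ?thesis
      proof cases
        case 1 then show ?thesis using T3 by blast
      next
        case 2 then show ?thesis using T3 ypq joined_refl[of ?H y] by blast
      next
        case 3 then have "joined ?G x y" using T3 joined_trans by metis
        then show ?thesis using ypq joined_refl[of ?H y] by blast
      qed
    qed
    then show "(joined ?G x p \<and> joined ?H p y) \<or> (joined ?G x q \<and> joined ?H q y)" by blast
  next
    assume "(joined ?G x p \<and> joined ?H p y) \<or> (joined ?G x q \<and> joined ?H q y)"
    then show "joined X x y"
      by (meson joined_mono joined_trans inf_le1)
  qed
qed

lemma perc_prob_cong: "(\<And>X. X \<subseteq> E \<Longrightarrow> P X = Q X) \<Longrightarrow> perc_prob E mu P = perc_prob E mu Q"
proof -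
  assume h: "\<And>X. X \<subseteq> E \<Longrightarrow> P X = Q X"
  have "{X. X \<subseteq> E \<and> P X} = {X. X \<subseteq> E \<and> Q X}" using h by auto
  then show ?thesis unfolding perc_prob_def by simp
qed

lemma perc_or:
  assumes "finite E"
  shows "perc_prob E mu (\<lambda>X. P X \<or> Q X) =
    perc_prob E mu P + perc_prob E mu Q - perc_prob E mu (\<lambda>X. P X \<and> Q X)"
proof -
  let ?w = "\<lambda>X. (\<Prod>e\<in>X. mu e) * (\<Prod>e\<in>E - X. 1 - mu e)"
  have f1: "finite {X. X \<subseteq> E \<and> P X}" and f2: "finite {X. X \<subseteq> E \<and> Q X}"
    using assms by (auto intro: rev_finite_subset[of "Pow E"])
  have u: "{X. X \<subseteq> E \<and> (P X \<or> Q X)} = {X. X \<subseteq> E \<and> P X} \<union> {X. X \<subseteq> E \<and> Q X}" by auto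
  have i: "{X. X \<subseteq> E \<and> (P X \<and> Q X)} = {X. X \<subseteq> E \<and> P X} \<inter> {X. X \<subseteq> E \<and> Q X}" by auto
  show ?thesis unfolding perc_prob_def u i
    using sum.union_inter[OF f1 f2, of ?w] by simp
qed

lemma perc_prod:
  assumes f1: "finite E1" and f2: "finite E2" and d: "E1 \<inter> E2 = {}"
  shows "perc_prob (E1 \<union> E2) mu (\<lambda>X. A (X \<inter> E1) \<and> B (X \<inter> E2)) = perc_prob E1 mu A * perc_prob E2 mu B"
proof -
  define w1 where "w1 Y = (\<Prod>e\<in>Y. mu e) * (\<Prod>e\<in>E1 - Y. 1 - mu e)" for Y
  define w2 where "w2 Y = (\<Prod>e\<in>Y. mu e) * (\<Prod>e\<in>E2 - Y. 1 - mu e)" for Y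
  define w where "w Y = (\<Prod>e\<in>Y. mu e) * (\<Prod>e\<in>(E1 \<union> E2) - Y. 1 - mu e)" for Y
  define S1 where "S1 = {X. X \<subseteq> E1 \<and> A X}"
  define S2 where "S2 = {X. X \<subseteq> E2 \<and> B X}"
  define S where "S = {X. X \<subseteq> E1 \<union> E2 \<and> A (X \<inter> E1) \<and> B (X \<inter> E2)}"
  have fS1: "finite S1" unfolding S1_def using f1 by (auto intro: rev_finite_subset[of "Pow E1"])
  have fS2: "finite S2" unfolding S2_def using f2 by (auto intro: rev_finite_subset[of "Pow E2"])
  have ww: "w (Y \<union> Z) = w1 Y * w2 Z" if "Y \<in> S1" "Z \<in> S2" for Y Z
  proof -
    have Y: "Y \<subseteq> E1" and Z: "Z \<subseteq> E2" using that unfolding S1_def S2_def by auto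
    have fY: "finite Y" using Y f1 finite_subset by blast
    have fZ: "finite Z" using Z f2 finite_subset by blast
    have dYZ: "Y \<inter> Z = {}" using Y Z d by blast
    have a: "(\<Prod>e\<in>Y \<union> Z. mu e) = (\<Prod>e\<in>Y. mu e) * (\<Prod>e\<in>Z. mu e)"
      using prod.union_disjoint[OF fY fZ dYZ] by simp
    have eq: "(E1 \<union> E2) - (Y \<union> Z) = (E1 - Y) \<union> (E2 - Z)" using Y Z d by blast
    have b: "(\<Prod>e\<in>(E1 \<union> E2) - (Y \<union> Z). 1 - mu e) = (\<Prod>e\<in>E1 - Y. 1 - mu e) * (\<Prod>e\<in>E2 - Z. 1 - mu e)"
      unfolding eq using prod.union_disjoint[of "E1 - Y" "E2 - Z"] f1 f2 d by blast
    show ?thesis unfolding w_def w1_def w2_def a b by (simp add: algebra_simps)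
  qed
  have aux: "(a \<union> b) \<inter> E1 = a" "(a \<union> b) \<inter> E2 = b" if "a \<subseteq> E1" "b \<subseteq> E2" for a b
    using d that by blast+
  have bij: "bij_betw (\<lambda>(Y,Z). Y \<union> Z) (S1 \<times> S2) S"
    apply (rule bij_betw_byWitness[where f' = "\<lambda>X. (X \<inter> E1, X \<inter> E2)"])
    using d unfolding S1_def S2_def S_def
       apply (auto simp: aux)
    done
  have "perc_prob E1 mu A * perc_prob E2 mu B = (\<Sum>Y\<in>S1. w1 Y) * (\<Sum>Z\<in>S2. w2 Z)"
    unfolding perc_prob_def S1_def S2_def w1_def w2_def by simp
  also have "\<dots> = (\<Sum>p\<in>S1 \<times> S2. w1 (fst p) * w2 (snd p))"
    by (simp add: sum_product sum.cartesian_product case_prod_beta)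
  also have "\<dots> = (\<Sum>p\<in>S1 \<times> S2. w ((\<lambda>(Y,Z). Y \<union> Z) p))"
    by (rule sum.cong) (auto simp: ww)
  also have "\<dots> = (\<Sum>X\<in>S. w X)"
    using sum.reindex_bij_betw[OF bij, of w] by simp
  also have "\<dots> = perc_prob (E1 \<union> E2) mu (\<lambda>X. A (X \<inter> E1) \<and> B (X \<inter> E2))"
    unfolding perc_prob_def S_def w_def by simp
  finally show ?thesis by simp
qed


lemma bb_edges_mono: "V \<subseteq> V' \<Longrightarrow> E \<subseteq> E' \<Longrightarrow> bb_edges V E \<subseteq> bb_edges V' E'"
  unfolding bb_edges_def by blast

theorem lemma3p3:
  fixes VF :: "'a set" and EF :: "'a set set" and v :: 'a
    and Cs :: "'a set set" and mu :: "('a \<times> bool) set \<Rightarrow> real"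
  assumes graph: "simple_graph VF EF"
    and cut: "cut_vertex VF EF v"
    and k2: "card (components (VF - {v}) (del_vertex_edges EF v)) \<ge> 2"
    and Cs: "Cs \<subseteq> components (VF - {v}) (del_vertex_edges EF v)"
    and weight: "\<forall>e\<in>bb_edges VF EF. 0 \<le> mu e \<and> mu e \<le> 1"
  defines "VG \<equiv> \<Union>Cs \<union> {v}"
    and "VH \<equiv> \<Union>(components (VF - {v}) (del_vertex_edges EF v) - Cs) \<union> {v}"
  defines "EF' \<equiv> bb_edges VF EF"
    and "EG \<equiv> bb_edges VG (induced_edges EF VG)"
    and "EH0 \<equiv> bb_edges VH (induced_edges EF VH) - {{(v, False), (v, True)}}"
  assumes x: "x \<in> bb_vertices VG" and y: "y \<in> bb_vertices VH"
  shows "perc_prob EF' mu (\<lambda>X. joined X x y) =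
      perc_prob EG mu (\<lambda>X. joined X x (v, False)) * perc_prob EH0 mu (\<lambda>X. joined X (v, False) y)
    + perc_prob EG mu (\<lambda>X. joined X x (v, True)) * perc_prob EH0 mu (\<lambda>X. joined X (v, True) y)
    - perc_prob EG mu (\<lambda>X. joined X x (v, False) \<and> joined X x (v, True))
      * perc_prob EH0 mu (\<lambda>X. joined X (v, False) y \<and> joined X (v, True) y)"
  proof -
  let ?D = "del_vertex_edges EF v"
  define Comp where "Comp = components (VF - {v}) ?D"
  have vF: "v \<in> VF" using cut unfolding cut_vertex_def by blast
  have finVF: "finite VF" using graph unfolding simple_graph_def by blast
  have edgesF: "\<And>e. e \<in> EF \<Longrightarrow> e \<subseteq> VF \<and> card e = 2" using graph unfolding simple_graph_def by blast
  have cls: "\<exists>a\<in>VF-{v}. C = {y\<in>VF-{v}. joined ?D a y}" if "C \<in> Comp" for C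
    using that unfolding Comp_def components_def by blast
  have Csub: "C \<subseteq> VF - {v}" if "C \<in> Comp" for C using cls[OF that] by blast
  have mem: "{y\<in>VF-{v}. joined ?D a y} \<in> Comp" if "a \<in> VF - {v}" for a
    using that unfolding Comp_def components_def by blast
  have disj: "C1 = C2" if H: "C1 \<in> Comp" "C2 \<in> Comp" "z \<in> C1" "z \<in> C2" for C1 C2 z
  proof -
    obtain a where a: "a \<in> VF-{v}" "C1 = {y\<in>VF-{v}. joined ?D a y}" using cls H(1) by blast
    obtain b where b: "b \<in> VF-{v}" "C2 = {y\<in>VF-{v}. joined ?D b y}" using cls H(2) by blast
    have az: "joined ?D a z" and bz: "joined ?D b z" using a b H by auto
    have ab: "joined ?D a b" using joined_trans[OF az joined_sym[OF bz]] .
    have ba: "joined ?D b a" using joined_sym[OF ab] .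
    have "joined ?D a y = joined ?D b y" for y using joined_trans[OF ab, of y] joined_trans[OF ba, of y] by blast
    then show ?thesis unfolding a(2) b(2) by simp
  qed
  have Cs': "Cs \<subseteq> Comp" using Cs unfolding Comp_def by simp
  have VH': "VH = \<Union>(Comp - Cs) \<union> {v}" unfolding VH_def Comp_def by simp
  have VGsub: "VG \<subseteq> VF" unfolding VG_def using Csub Cs' vF by blast
  have VHsub: "VH \<subseteq> VF" unfolding VH' using Csub vF by blast
  have vG: "v \<in> VG" unfolding VG_def by blast
  have vH: "v \<in> VH" unfolding VH' by blast
  have cover: "VF \<subseteq> VG \<union> VH"
  proof
    fix a assume a: "a \<in> VF"
    show "a \<in> VG \<union> VH"
    proof (cases "a = v")
      case True then show ?thesis using vG by blast
    next
      case False
      then have a': "a \<in> VF - {v}" using a by blast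
      have "a \<in> {y\<in>VF-{v}. joined ?D a y}" using a' joined_refl[of ?D a] by blast
      then show ?thesis using mem[OF a'] unfolding VG_def VH' by blast
    qed
  qed
  have inter: "VG \<inter> VH \<subseteq> {v}"
  proof
    fix z assume z: "z \<in> VG \<inter> VH"
    show "z \<in> {v}"
    proof (rule ccontr)
      assume "z \<notin> {v}"
      then obtain C1 C2 where "C1 \<in> Cs" "C2 \<in> Comp - Cs" "z \<in> C1" "z \<in> C2"
        using z unfolding VG_def VH' by blast
      then show False using disj Cs' by blast
    qed
  qed
  have edge_split: "{a,c} \<subseteq> VG \<or> {a,c} \<subseteq> VH" if ac: "{a,c} \<in> EF" for a c
  proof (cases "a = v \<or> c = v")
    case True
    have "{a,c} \<subseteq> VF" using edgesF ac by blast
    then show ?thesis using True cover vG vH by blast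
  next
    case False
    have a': "a \<in> VF - {v}" and c': "c \<in> VF - {v}" using edgesF ac False by blast+
    have "{a,c} \<in> ?D" using ac False unfolding del_vertex_edges_def by blast
    then have "joined ?D a c" by (rule joined_edge)
    then have ac_in: "a \<in> {y\<in>VF-{v}. joined ?D a y}" "c \<in> {y\<in>VF-{v}. joined ?D a y}"
      using a' c' joined_refl[of ?D a] by blast+
    show ?thesis
    proof (cases "{y\<in>VF-{v}. joined ?D a y} \<in> Cs")
      case True then show ?thesis using ac_in unfolding VG_def by blast
    next
      case False then show ?thesis using ac_in mem[OF a'] unfolding VH' by blast
    qed
  qed
  let ?p = "(v, False)" and ?q = "(v, True)"
  have cG: "\<forall>e\<in>EG. e \<subseteq> bb_vertices VG"
    unfolding EG_def bb_edges_def induced_edges_def bb_vertices_def by blast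
  have cH: "\<forall>e\<in>EH0. e \<subseteq> bb_vertices VH"
    unfolding EH0_def bb_edges_def induced_edges_def bb_vertices_def by blast
  have WGH: "bb_vertices VG \<inter> bb_vertices VH \<subseteq> {?p, ?q}"
    using inter unfolding bb_vertices_def by auto
  have pq: "?p \<in> bb_vertices VG" "?q \<in> bb_vertices VG" "?p \<in> bb_vertices VH" "?q \<in> bb_vertices VH"
    using vG vH unfolding bb_vertices_def by auto
  have EGsub: "EG \<subseteq> EF'" unfolding EG_def EF'_def
    by (rule bb_edges_mono[OF VGsub]) (auto simp: induced_edges_def)
  have EHsub: "EH0 \<subseteq> EF'" unfolding EH0_def EF'_def
    using bb_edges_mono[OF VHsub, of "induced_edges EF VH" EF] by (auto simp: induced_edges_def)
  have EFsub: "EF' \<subseteq> EG \<union> EH0"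
  proof
    fix e assume "e \<in> EF'"
    then consider (h) a c b where "e = {(a,b),(c,b)}" "{a,c} \<in> EF"
      | (vt) a where "e = {(a,False),(a,True)}" "a \<in> VF"
      unfolding EF'_def bb_edges_def by blast
    then show "e \<in> EG \<union> EH0"
    proof cases
      case h
      from edge_split[OF h(2)] show ?thesis
      proof
        assume "{a,c} \<subseteq> VG"
        then have "e \<in> EG" unfolding EG_def bb_edges_def induced_edges_def using h by blast
        then show ?thesis by blast
      next
        assume "{a,c} \<subseteq> VH"
        then have "e \<in> bb_edges VH (induced_edges EF VH)"
          unfolding bb_edges_def induced_edges_def using h by blast
        moreover have "e \<noteq> {?p, ?q}" using h by (cases b) auto
        ultimately show ?thesis unfolding EH0_def by blast
      qed
    next
      case vt
      show ?thesis
      proof (cases "a \<in> VG")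
        case True
        then have "e \<in> EG" unfolding EG_def bb_edges_def using vt by blast
        then show ?thesis by blast
      next
        case False
        then have "a \<in> VH" "a \<noteq> v" using cover vt vG by blast+
        then have "e \<in> bb_edges VH (induced_edges EF VH)" "e \<noteq> {?p, ?q}"
          unfolding bb_edges_def using vt by (blast, auto simp: doubleton_eq_iff)
        then show ?thesis unfolding EH0_def by blast
      qed
    qed
  qed
  have EFeq: "EF' = EG \<union> EH0" using EGsub EHsub EFsub by blast
  have EGHdisj: "EG \<inter> EH0 = {}"
  proof (rule ccontr)
    assume "EG \<inter> EH0 \<noteq> {}"
    then obtain e where eG: "e \<in> EG" and eH: "e \<in> EH0" by blast
    have sub: "e \<subseteq> {?p, ?q}" using eG eH cG cH WGH by blast
    have ne: "e \<noteq> {?p, ?q}" using eH unfolding EH0_def by blast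
    from eG consider (h) a c b where "e = {(a,b),(c,b)}" "{a,c} \<in> EF"
      | (vt) a where "e = {(a,False),(a,True)}"
      unfolding EG_def bb_edges_def induced_edges_def by blast
    then show False
    proof cases
      case h
      have "a \<noteq> c" using edgesF[OF h(2)] by (cases "a = c") auto
      then show False using sub h(1) by (cases b) auto
    next
      case vt
      then show False using sub ne by auto
    qed
  qed
  have finEF: "finite EF'"
  proof -
    have "EF' \<subseteq> Pow (VF \<times> (UNIV :: bool set))"
      unfolding EF'_def bb_edges_def using edgesF by blast
    moreover have "finite (Pow (VF \<times> (UNIV :: bool set)))" using finVF by simp
    ultimately show ?thesis by (rule finite_subset)
  qed
  have finG: "finite EG" using finEF EGsub finite_subset by blast
  have finH: "finite EH0" using finEF EHsub finite_subset by blast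
  define A1 where "A1 = (\<lambda>X. joined X x ?p)"
  define A2 where "A2 = (\<lambda>X. joined X x ?q)"
  define B1 where "B1 = (\<lambda>X. joined X ?p y)"
  define B2 where "B2 = (\<lambda>X. joined X ?q y)"
  have step1: "perc_prob EF' mu (\<lambda>X. joined X x y) =
     perc_prob (EG \<union> EH0) mu (\<lambda>X. (A1 (X \<inter> EG) \<and> B1 (X \<inter> EH0)) \<or> (A2 (X \<inter> EG) \<and> B2 (X \<inter> EH0)))"
    unfolding EFeq
    apply (rule perc_prob_cong)
    unfolding A1_def A2_def B1_def B2_def
    apply (rule key[OF _ cG cH WGH pq x y])
    by simp
  have step2: "perc_prob (EG \<union> EH0) mu (\<lambda>X. (A1 (X \<inter> EG) \<and> B1 (X \<inter> EH0)) \<and> (A2 (X \<inter> EG) \<and> B2 (X \<inter> EH0)))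
      = perc_prob (EG \<union> EH0) mu (\<lambda>X. (\<lambda>Y. A1 Y \<and> A2 Y) (X \<inter> EG) \<and> (\<lambda>Z. B1 Z \<and> B2 Z) (X \<inter> EH0))"
    by (rule perc_prob_cong) auto
  have orr: "perc_prob (EG \<union> EH0) mu (\<lambda>X. (A1 (X \<inter> EG) \<and> B1 (X \<inter> EH0)) \<or> (A2 (X \<inter> EG) \<and> B2 (X \<inter> EH0)))
    = perc_prob (EG \<union> EH0) mu (\<lambda>X. A1 (X \<inter> EG) \<and> B1 (X \<inter> EH0))
    + perc_prob (EG \<union> EH0) mu (\<lambda>X. A2 (X \<inter> EG) \<and> B2 (X \<inter> EH0))
    - perc_prob (EG \<union> EH0) mu (\<lambda>X. (A1 (X \<inter> EG) \<and> B1 (X \<inter> EH0)) \<and> (A2 (X \<inter> EG) \<and> B2 (X \<inter> EH0)))"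
    by (rule perc_or) (simp add: finG finH)
  have p1: "perc_prob (EG \<union> EH0) mu (\<lambda>X. A1 (X \<inter> EG) \<and> B1 (X \<inter> EH0)) = perc_prob EG mu A1 * perc_prob EH0 mu B1"
    by (rule perc_prod[OF finG finH EGHdisj])
  have p2: "perc_prob (EG \<union> EH0) mu (\<lambda>X. A2 (X \<inter> EG) \<and> B2 (X \<inter> EH0)) = perc_prob EG mu A2 * perc_prob EH0 mu B2"
    by (rule perc_prod[OF finG finH EGHdisj])
  have p3: "perc_prob (EG \<union> EH0) mu (\<lambda>X. (\<lambda>Y. A1 Y \<and> A2 Y) (X \<inter> EG) \<and> (\<lambda>Z. B1 Z \<and> B2 Z) (X \<inter> EH0))
     = perc_prob EG mu (\<lambda>Y. A1 Y \<and> A2 Y) * perc_prob EH0 mu (\<lambda>Z. B1 Z \<and> B2 Z)"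
    by (rule perc_prod[OF finG finH EGHdisj])
  have fin: "perc_prob EF' mu (\<lambda>X. joined X x y) = perc_prob EG mu A1 * perc_prob EH0 mu B1
     + perc_prob EG mu A2 * perc_prob EH0 mu B2
     - perc_prob EG mu (\<lambda>Y. A1 Y \<and> A2 Y) * perc_prob EH0 mu (\<lambda>Z. B1 Z \<and> B2 Z)"
    unfolding step1 orr p1 p2 step2 p3 by (rule refl)
  then show ?thesis unfolding A1_def A2_def B1_def B2_def .
qed

end
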